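(* Let $A,B$ be complex $2\times 2$ matrices. The following are equivalent: (1) $A$ and $B$ have identical pseudospectra, i.e. $\|(zI-A)^{-1}\|=\|(zI-B)^{-1}\|$ for all $z\in\mathbb{C}$; (2) $A$ and $B$ are polynomially isometric, i.e. $\|p(A)\|=\|p(B)\|$ for every complex polynomial $p$; (3) $A$ and $B$ have super-identical pseudospectra, i.e. $s_k(zI-A)=s_k(zI-B)$ for all $z\in\mathbb{C}$ and $k=1,2$; (4) $A$ and $B$ are unitarily similar.
   Context: $\|\cdot\|$ is the spectral norm. By convention $\|(zI-T)^{-1}\|=\infty$ for $z$ an eigenvalue of $T$. For a $d\times d$ matrix $T$, $s_1(T)\ge\cdots\ge s_d(T)$ denote its singular values (nonnegative square roots of the eigenvalues of $T^*T$, in nonincreasing order). *)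

theory Defs
  imports "HOL-Analysis.Analysis" "HOL-Computational_Algebra.Polynomial" "HOL-Library.Multiset"
begin

text \<open>Square complex matrices are modelled as complex^'n^'n; the 2x2 case is complex^2^2.
  The norm on complex^'n is the Euclidean (Hermitian) norm, so the operator norm below is the
  spectral norm.\<close>

definition spec_norm :: "complex^'n^'n \<Rightarrow> real" where
  "spec_norm T = onorm (\<lambda>x. T *v x)"

definition resolvent_norm :: "complex^'n^'n \<Rightarrow> complex \<Rightarrow> ereal" where
  "resolvent_norm T z =
     (if invertible (mat z - T) then ereal (spec_norm (matrix_inv (mat z - T))) else \<infinity>)"

definition adj :: "complex^'n^'n \<Rightarrow> complex^'n^'n" where
  "adj T = (\<chi> i j. cnj (T $ j $ i))"

definition unitary_mat :: "complex^'n^'n \<Rightarrow> bool" where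
  "unitary_mat U \<longleftrightarrow> adj U ** U = mat 1"

definition unitarily_similar :: "complex^'n^'n \<Rightarrow> complex^'n^'n \<Rightarrow> bool" where
  "unitarily_similar A B \<longleftrightarrow> (\<exists>U. unitary_mat U \<and> B = adj U ** A ** U)"

definition mat_pow :: "complex^'n^'n \<Rightarrow> nat \<Rightarrow> complex^'n^'n" where
  "mat_pow A k = ((\<lambda>M. A ** M) ^^ k) (mat 1)"

definition poly_mat :: "complex poly \<Rightarrow> complex^'n^'n \<Rightarrow> complex^'n^'n" where
  "poly_mat p A = (\<Sum>k\<le>degree p. mat (coeff p k) ** mat_pow A k)"

definition charpoly :: "complex^'n^'n \<Rightarrow> complex poly" where
  "charpoly M = det (mat [:0, 1:] - (\<chi> i j. [:M $ i $ j:]))"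

definition eig_mset :: "complex^'n^'n \<Rightarrow> complex multiset" where
  "eig_mset M = (THE m. size m = CARD('n) \<and> charpoly M = (\<Prod>a\<in>#m. [:- a, 1:]))"

text \<open>Singular values s_1 \<ge> ... \<ge> s_n: nonnegative square roots of the eigenvalues of T*T,
  in nonincreasing order; sing_val T k = s_k(T) for 1 \<le> k \<le> n.\<close>
definition singular_values :: "complex^'n^'n \<Rightarrow> real list" where
  "singular_values T =
     rev (sorted_list_of_multiset (image_mset (\<lambda>\<mu>. sqrt (Re \<mu>)) (eig_mset (adj T ** T))))"

definition sing_val :: "complex^'n^'n \<Rightarrow> nat \<Rightarrow> real" where
  "sing_val T k = singular_values T ! (k - 1)"

end

theory Submission
  imports Defs
begin

definition mk2 :: "complex \<Rightarrow> complex \<Rightarrow> complex \<Rightarrow> complex \<Rightarrow> complex^2^2" where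
  "mk2 a b c d = (\<chi> i j. if i = 1 then (if j = 1 then a else b) else (if j = 1 then c else d))"

lemma two_ne: "(1::2) \<noteq> 2" "(2::2) \<noteq> 1" by simp_all

lemma mk2_nth[simp]: "mk2 a b c d $ 1 $ 1 = a" "mk2 a b c d $ 1 $ 2 = b"
   "mk2 a b c d $ 2 $ 1 = c" "mk2 a b c d $ 2 $ 2 = d"
  by (simp_all add: mk2_def)

lemma mk2_eta: "M = mk2 (M$1$1) (M$1$2) (M$2$1) (M$2$2)"
  by (simp add: vec_eq_iff forall_2)

lemma mk2_eq[simp]: "mk2 a b c d = mk2 a' b' c' d' \<longleftrightarrow> a = a' \<and> b = b' \<and> c = c' \<and> d = d'"
  by (auto simp add: vec_eq_iff forall_2)

lemma mk2_mult[simp]: "mk2 a b c d ** mk2 a' b' c' d' = mk2 (a*a' + b*c') (a*b' + b*d') (c*a'+d*c') (c*b'+d*d')"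
  by (simp add: vec_eq_iff forall_2 matrix_matrix_mult_def sum_2)

lemma mk2_mat: "mat z = mk2 z 0 0 z"
  by (simp add: vec_eq_iff forall_2 mat_def)

lemma mk2_diff[simp]: "mk2 a b c d - mk2 a' b' c' d' = mk2 (a-a') (b-b') (c-c') (d-d')"
  by (simp add: vec_eq_iff forall_2)
lemma mk2_add[simp]: "mk2 a b c d + mk2 a' b' c' d' = mk2 (a+a') (b+b') (c+c') (d+d')"
  by (simp add: vec_eq_iff forall_2)
lemma mk2_uminus[simp]: "- mk2 a b c d = mk2 (-a) (-b) (-c) (-d)"
  by (simp add: vec_eq_iff forall_2)
lemma mk2_zero: "(0::complex^2^2) = mk2 0 0 0 0"
  by (simp add: vec_eq_iff forall_2)

lemma mk2_adj[simp]: "adj (mk2 a b c d) = mk2 (cnj a) (cnj c) (cnj b) (cnj d)"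
  by (simp add: vec_eq_iff forall_2 adj_def)

lemma mk2_det[simp]: "det (mk2 a b c d) = a*d - b*c"
  by (simp add: det_2)

lemma mk2_trace[simp]: "trace (mk2 a b c d) = a + d"
  by (simp add: trace_def sum_2)

definition vec2 :: "complex \<Rightarrow> complex \<Rightarrow> complex^2" where
  "vec2 x y = (\<chi> i. if i = 1 then x else y)"

lemma vec2_nth[simp]: "vec2 x y $ 1 = x" "vec2 x y $ 2 = y" by (simp_all add: vec2_def)
lemma vec2_eta: "v = vec2 (v$1) (v$2)" by (simp add: vec_eq_iff forall_2)
lemma vec2_eq[simp]: "vec2 a b = vec2 a' b' \<longleftrightarrow> a = a' \<and> b = b'"
  by (auto simp add: vec_eq_iff forall_2)

lemma mk2_mv[simp]: "mk2 a b c d *v vec2 x y = vec2 (a*x+b*y) (c*x+d*y)"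
  by (simp add: vec_eq_iff forall_2 matrix_vector_mult_def sum_2)

lemma norm_vec2_sq: "(norm (vec2 x y))^2 = (cmod x)^2 + (cmod y)^2"
  by (simp add: norm_vec_def L2_set_def sum_2)

lemma norm_vec2: "norm (vec2 x y) = sqrt ((cmod x)^2 + (cmod y)^2)"
  by (simp add: norm_vec_def L2_set_def sum_2)

lemma cm_sq: "complex_of_real ((cmod z)^2) = z * cnj z"
  by (rule complex_norm_square)

lemma lagrange2:
  fixes y1 y2 z1 z2 :: complex
  shows "((cmod y1)^2 + (cmod y2)^2) * ((cmod z1)^2 + (cmod z2)^2) =
     (cmod (y1*z2 - y2*z1))^2 + (cmod (cnj y1 * z1 + cnj y2 * z2))^2"
proof -
  have "complex_of_real (((cmod y1)^2 + (cmod y2)^2) * ((cmod z1)^2 + (cmod z2)^2)) =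
     complex_of_real ((cmod (y1*z2 - y2*z1))^2 + (cmod (cnj y1 * z1 + cnj y2 * z2))^2)"
    unfolding of_real_add of_real_mult cm_sq by (simp add: algebra_simps)
  then show ?thesis using of_real_eq_iff by blast
qed

lemma frob_id:
  fixes a b c d x1 x2 :: complex
  shows "((cmod a)^2 + (cmod b)^2 + (cmod c)^2 + (cmod d)^2) * ((cmod x1)^2 + (cmod x2)^2)
    = (cmod (a*x1+b*x2))^2 + (cmod (c*x1+d*x2))^2 + (cmod (a*(-cnj x2)+b*cnj x1))^2 + (cmod (c*(-cnj x2)+d*cnj x1))^2"
proof -
  have "complex_of_real (((cmod a)^2 + (cmod b)^2 + (cmod c)^2 + (cmod d)^2) * ((cmod x1)^2 + (cmod x2)^2))
    = complex_of_real ((cmod (a*x1+b*x2))^2 + (cmod (c*x1+d*x2))^2 + (cmod (a*(-cnj x2)+b*cnj x1))^2 + (cmod (c*(-cnj x2)+d*cnj x1))^2)"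
    unfolding of_real_add of_real_mult cm_sq by (simp add: algebra_simps)
  then show ?thesis using of_real_eq_iff by blast
qed

lemma det_id:
  fixes a b c d x1 x2 :: complex
  shows "(a*x1+b*x2) * (c*(-cnj x2)+d*cnj x1) - (c*x1+d*x2) * (a*(-cnj x2)+b*cnj x1)
     = (a*d-b*c) * complex_of_real ((cmod x1)^2 + (cmod x2)^2)"
  unfolding of_real_add cm_sq by (simp add: algebra_simps)

definition frob2 :: "complex^2^2 \<Rightarrow> real" where
  "frob2 M = (cmod (M$1$1))^2 + (cmod (M$1$2))^2 + (cmod (M$2$1))^2 + (cmod (M$2$2))^2"
definition dd :: "complex^2^2 \<Rightarrow> real" where "dd M = cmod (det M)"
definition r1 :: "complex^2^2 \<Rightarrow> real" where
  "r1 M = (frob2 M + sqrt ((frob2 M)^2 - 4 * (dd M)^2)) / 2"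
definition r2 :: "complex^2^2 \<Rightarrow> real" where
  "r2 M = (frob2 M - sqrt ((frob2 M)^2 - 4 * (dd M)^2)) / 2"

lemma frob2_mk2[simp]: "frob2 (mk2 a b c d) = (cmod a)^2 + (cmod b)^2 + (cmod c)^2 + (cmod d)^2"
  by (simp add: frob2_def)
lemma dd_mk2[simp]: "dd (mk2 a b c d) = cmod (a*d - b*c)"
  by (simp add: dd_def)

lemma F_ge_aux: "2 * cmod (a*d - b*c) \<le> (cmod a)^2 + (cmod b)^2 + (cmod c)^2 + (cmod d)^2"
proof -
  have "cmod (a*d - b*c) \<le> cmod a * cmod d + cmod b * cmod c"
    by (metis norm_mult norm_triangle_ineq4)
  moreover have "2 * (cmod a * cmod d) \<le> (cmod a)^2 + (cmod d)^2"
    using sum_squares_bound[of "cmod a" "cmod d"] by (simp add: power2_eq_square)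
  moreover have "2 * (cmod b * cmod c) \<le> (cmod b)^2 + (cmod c)^2"
    using sum_squares_bound[of "cmod b" "cmod c"] by (simp add: power2_eq_square)
  ultimately show ?thesis by linarith
qed

lemma F_ge: "2 * dd M \<le> frob2 M"
  using F_ge_aux[of "M$1$1" "M$2$2" "M$1$2" "M$2$1"] by (simp add: frob2_def dd_def det_2 algebra_simps)

lemma dd_nonneg: "0 \<le> dd M" by (simp add: dd_def)

lemma disc_nonneg: "0 \<le> (frob2 M)^2 - 4 * (dd M)^2"
proof -
  have "(2 * dd M)^2 \<le> (frob2 M)^2" using power_mono[OF F_ge[of M], of 2] dd_nonneg[of M]
    by simp
  moreover have "(2*dd M)^2 = 4*(dd M)^2" by (simp add: power2_eq_square)
  ultimately show ?thesis by simp
qed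

lemma r_props:
  fixes M defines "s \<equiv> sqrt ((frob2 M)^2 - 4 * (dd M)^2)"
  shows "s \<ge> 0" "s^2 = (frob2 M)^2 - 4 * (dd M)^2" "s \<le> frob2 M"
    "r1 M + r2 M = frob2 M" "r1 M * r2 M = (dd M)^2" "0 \<le> r2 M" "r2 M \<le> r1 M"
proof -
  show s0: "s \<ge> 0" unfolding s_def using disc_nonneg[of M] by simp
  show s2: "s^2 = (frob2 M)^2 - 4 * (dd M)^2" unfolding s_def using disc_nonneg[of M] real_sqrt_pow2 by blast
  have F0: "0 \<le> frob2 M" using F_ge[of M] dd_nonneg[of M] by linarith
  show sF: "s \<le> frob2 M"
  proof (rule power2_le_imp_le)
    show "s^2 \<le> (frob2 M)^2" using s2 by simp
  qed (rule F0)
  show "r1 M + r2 M = frob2 M" by (simp add: r1_def r2_def field_simps)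
  show "r1 M * r2 M = (dd M)^2"
    using s2 unfolding r1_def r2_def s_def[symmetric] by (simp add: field_simps power2_eq_square)
  show "0 \<le> r2 M" using sF unfolding r2_def s_def[symmetric] by simp
  show "r2 M \<le> r1 M" using s0 unfolding r1_def r2_def s_def[symmetric] by simp
qed

lemma quad_bound:
  fixes F D u w :: real
  assumes "0 \<le> u" "0 \<le> D" "2 * D \<le> F" "w^2 - F*u*w + D^2*u^2 \<le> 0"
  shows "w \<le> (F + sqrt (F^2 - 4*D^2))/2 * u"
proof (rule ccontr)
  define s where "s = sqrt (F^2 - 4*D^2)"
  have "(2*D)^2 \<le> F^2" using power_mono[OF assms(3), of 2] assms by simp
  moreover have "(2*D)^2 = 4*D^2" by (simp add: power2_eq_square)
  ultimately have "0 \<le> F^2 - 4*D^2" by simp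
  then have s2: "s^2 = F^2 - 4*D^2" unfolding s_def using real_sqrt_pow2 by blast
  have s0: "0 \<le> s" unfolding s_def using \<open>0 \<le> F^2 - 4*D^2\<close> by simp
  assume "\<not> ?thesis"
  then have h1: "w - (F + s)/2 * u > 0" unfolding s_def by simp
  have h2: "w - (F - s)/2 * u \<ge> w - (F + s)/2 * u" using s0 assms(1)
    by (simp add: algebra_simps mult_left_mono)
  have "(w - (F + s)/2 * u) * (w - (F - s)/2 * u) > 0" using h1 h2
    by (meson less_le_trans mult_pos_pos)
  moreover have "(w - (F + s)/2 * u) * (w - (F - s)/2 * u) = w^2 - F*u*w + (F^2 - s^2)/4*u^2"
    by (simp add: field_simps power2_eq_square)
  moreover have "(F^2 - s^2)/4 = D^2" using s2 by simp
  ultimately show False using assms(4) by (metis not_le)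
qed

lemma norm_bound_sq: "(norm (M *v x))^2 \<le> r1 M * (norm x)^2"
proof -
  obtain a b c d where M: "M = mk2 a b c d" using mk2_eta by blast
  obtain x1 x2 where x: "x = vec2 x1 x2" using vec2_eta by blast
  define y1 where "y1 = a*x1+b*x2"
  define y2 where "y2 = c*x1+d*x2"
  define z1 where "z1 = a*(-cnj x2)+b*cnj x1"
  define z2 where "z2 = c*(-cnj x2)+d*cnj x1"
  define u where "u = (cmod x1)^2 + (cmod x2)^2"
  define w where "w = (cmod y1)^2 + (cmod y2)^2"
  define Z where "Z = (cmod z1)^2 + (cmod z2)^2"
  define F where "F = (cmod a)^2 + (cmod b)^2 + (cmod c)^2 + (cmod d)^2"
  define D where "D = cmod (a*d - b*c)"
  have u0: "0 \<le> u" unfolding u_def by simp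
  have e1: "F * u = w + Z" unfolding F_def u_def w_def Z_def y1_def y2_def z1_def z2_def
    using frob_id by simp
  have "y1*z2 - y2*z1 = (a*d-b*c) * complex_of_real u" unfolding u_def y1_def y2_def z1_def z2_def
    by (rule det_id)
  then have e2: "D * u = cmod (y1*z2 - y2*z1)" unfolding D_def using u0 by (simp add: norm_mult)
  have e3: "w * Z = (cmod (y1*z2 - y2*z1))^2 + (cmod (cnj y1 * z1 + cnj y2 * z2))^2"
    unfolding w_def Z_def by (rule lagrange2)
  have "w^2 - F*u*w + D^2*u^2 \<le> 0"
  proof -
    have "w^2 - F*u*w + D^2*u^2 = w^2 - (w + Z) * w + (D*u)^2"
      using e1 by (simp add: algebra_simps power2_eq_square)
    also have "\<dots> = - ((cmod (cnj y1 * z1 + cnj y2 * z2))^2)"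
      using e2 e3 by (simp add: algebra_simps power2_eq_square)
    finally show ?thesis by simp
  qed
  then have "w \<le> (F + sqrt (F^2 - 4*D^2))/2 * u"
    using quad_bound[OF u0, of D F w] F_ge_aux[of a d b c] unfolding F_def D_def by simp
  then show ?thesis unfolding M x w_def u_def y1_def y2_def F_def D_def r1_def
    by (simp add: norm_vec2_sq)
qed

lemma r1_sq: "(r1 M)^2 - frob2 M * r1 M + (dd M)^2 = 0"
proof -
  have "frob2 M = r1 M + r2 M" "(dd M)^2 = r1 M * r2 M" using r_props[of M] by auto
  then show ?thesis by (simp add: algebra_simps power2_eq_square)
qed

lemma r1_nonneg: "0 \<le> r1 M" using r_props[of M] by linarith

lemma attain: "\<exists>x. x \<noteq> 0 \<and> (norm (M *v x))^2 = r1 M * (norm x)^2"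
proof -
  obtain a b c d where M: "M = mk2 a b c d" using mk2_eta by blast
  define p where "p = (cmod a)^2 + (cmod c)^2"
  define r where "r = (cmod b)^2 + (cmod d)^2"
  define q where "q = cnj a * b + cnj c * d"
  define R where "R = r1 M"
  define s where "s = R - p"
  define F where "F = (cmod a)^2 + (cmod b)^2 + (cmod c)^2 + (cmod d)^2"
  define D where "D = cmod (a*d - b*c)"
  have pr: "p + r = F" unfolding p_def r_def F_def by simp
  have "complex_of_real (p * r - (cmod q)^2) = complex_of_real (D^2)"
    unfolding p_def r_def q_def D_def of_real_add of_real_mult of_real_diff cm_sq
    by (simp add: algebra_simps)
  then have prq: "p * r - (cmod q)^2 = D^2" using of_real_eq_iff by blast
  have RR: "R^2 - F*R + D^2 = 0" using r1_sq[of M] unfolding R_def M F_def D_def by simp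
  have qs: "(cmod q)^2 = s * (R - r)"
  proof -
    have "s * (R - r) = R^2 - (p + r) * R + p*r" unfolding s_def by (simp add: algebra_simps power2_eq_square)
    then show ?thesis using RR pr prq by simp
  qed
  show ?thesis
  proof (cases "q = 0 \<and> s = 0")
    case True
    then have "R = p" unfolding s_def by simp
    have v0: "vec2 1 0 \<noteq> (0::complex^2)" by (metis vec2_nth(1) zero_index one_neq_zero)
    have "(norm (M *v vec2 1 0))^2 = r1 M * (norm (vec2 1 (0::complex)))^2"
      using \<open>R = p\<close> unfolding M R_def p_def by (simp add: norm_vec2_sq)
    then show ?thesis using v0 by blast
  next
    case False
    define x where "x = vec2 q (complex_of_real s)"
    have x0: "x \<noteq> 0" using False unfolding x_def by (auto simp: vec_eq_iff forall_2)
    have "complex_of_real ((norm (M *v x))^2) = complex_of_real ((cmod q)^2 * (p + 2 * s) + s^2 * r)"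
      unfolding M x_def norm_vec2_sq mk2_mv of_real_add of_real_mult cm_sq p_def r_def q_def
      by (simp add: algebra_simps power2_eq_square)
    then have "(norm (M *v x))^2 = (cmod q)^2 * (p + 2 * s) + s^2 * r" using of_real_eq_iff by blast
    also have "\<dots> = s * (R - r) * (p + 2 * s) + s^2 * r" using qs by simp
    also have "\<dots> = R * (s * (R - r) + s^2)" unfolding s_def by (simp add: algebra_simps power2_eq_square)
    also have "\<dots> = R * ((cmod q)^2 + s^2)" using qs by simp
    also have "\<dots> = R * (norm x)^2" unfolding x_def norm_vec2_sq by simp
    finally show ?thesis using x0 unfolding R_def by blast
  qed
qed

lemma spec_norm_formula: "spec_norm M = sqrt (r1 M)"
proof (rule antisym)
  show "spec_norm M \<le> sqrt (r1 M)" unfolding spec_norm_def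
  proof (rule onorm_le)
    fix x
    have "norm (M *v x) = sqrt ((norm (M *v x))^2)" by simp
    also have "\<dots> \<le> sqrt (r1 M * (norm x)^2)" using norm_bound_sq by (rule real_sqrt_le_mono)
    also have "\<dots> = sqrt (r1 M) * norm x" by (simp add: real_sqrt_mult)
    finally show "norm (M *v x) \<le> sqrt (r1 M) * norm x" .
  qed
next
  obtain x where x: "x \<noteq> 0" "(norm (M *v x))^2 = r1 M * (norm x)^2" using attain by blast
  have "norm (M *v x) = sqrt (r1 M) * norm x"
    using arg_cong[OF x(2), of sqrt] by (simp add: real_sqrt_mult)
  moreover have "norm (M *v x) \<le> spec_norm M * norm x" unfolding spec_norm_def
    by (rule onorm) simp
  ultimately show "sqrt (r1 M) \<le> spec_norm M" using x(1) by simp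
qed

lemma charpoly2: "charpoly (N::complex^2^2) = [:det N, - trace N, 1:]"
proof -
  have m: "(mat [:0, 1:] - (\<chi> i j. [:N $ i $ j:])) = (\<chi> i j. (if i = j then [:0,1:] else 0) - [:N $ i $ j:])"
    by (simp add: vec_eq_iff mat_def)
  have "charpoly N = ([:0,1:] - [:N$1$1:]) * ([:0,1:] - [:N$2$2:]) - [:N$1$2:] * [:N$2$1:]"
    unfolding charpoly_def m det_2 by simp
  also have "\<dots> = [:det N, - trace N, 1:]"
    by (simp add: det_2 trace_def sum_2 algebra_simps)
  finally show ?thesis .
qed

lemma mset2_unique:
  fixes x1 x2 :: complex
  assumes "size m = 2" "(\<Prod>a\<in>#m. [:- a, 1:]) = [:-x1, 1:] * [:-x2, 1:]"
  shows "m = {#x1, x2#}"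
proof -
  obtain a m' where m: "m = add_mset a m'" "size m' = 1"
    using size_eq_Suc_imp_eq_union[of m 1] assms(1) by auto
  obtain b where m': "m' = {#b#}" using m(2) size_eq_Suc_imp_eq_union[of m' 0] by auto
  have e: "[:-a, 1:] * [:-b, 1:] = [:-x1, 1:] * [:-x2, (1::complex):]"
    using assms(2) unfolding m m' by (simp add: mult.commute)
  have "poly ([:-a, 1:] * [:-b, 1:]) x1 = 0" unfolding e by simp
  then have "poly [:-a, 1:] x1 * poly [:-b, 1:] x1 = 0" by (simp only: poly_mult)
  then have "(x1 - a) * (x1 - b) = 0" by simp
  then have "x1 = a \<or> x1 = b" by simp
  have ne: "[:-x1, 1:] \<noteq> (0::complex poly)" by simp
  show ?thesis using \<open>x1 = a \<or> x1 = b\<close>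
  proof
    assume h: "x1 = a"
    have "[:-x1, 1:] * [:-b, 1:] = [:-x1, 1:] * [:-x2, (1::complex):]" using e unfolding h .
    then have "[:-b, 1:] = [:-x2, (1::complex):]" using mult_left_cancel[OF ne] by blast
    then have "b = x2" by simp
    then show ?thesis using h unfolding m m' by simp
  next
    assume h: "x1 = b"
    have "[:-x1, 1:] * [:-a, 1:] = [:-x1, 1:] * [:-x2, (1::complex):]" using e unfolding h by (metis mult.commute)
    then have "[:-a, 1:] = [:-x2, (1::complex):]" using mult_left_cancel[OF ne] by blast
    then have "a = x2" by simp
    then show ?thesis using h unfolding m m' by (simp add: add_mset_commute)
  qed
qed

lemma eig_mset2:
  fixes N :: "complex^2^2"
  assumes "charpoly N = [:-x1, 1:] * [:-x2, 1:]"
  shows "eig_mset N = {#x1, x2#}"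
  unfolding eig_mset_def
proof (rule the_equality)
  show "size {#x1, x2#} = CARD(2) \<and> charpoly N = (\<Prod>a\<in>#{#x1, x2#}. [:- a, 1:])"
    using assms by simp
next
  fix m assume "size m = CARD(2) \<and> charpoly N = (\<Prod>a\<in>#m. [:- a, 1:])"
  then have "size m = 2" "(\<Prod>a\<in>#m. [:- a, 1:]) = [:-x1, 1:] * [:-x2, 1:]" using assms by auto
  then show "m = {#x1, x2#}" by (rule mset2_unique)
qed

lemma charpoly_gram: "charpoly (adj M ** M) = [:- complex_of_real (r1 M), 1:] * [:- complex_of_real (r2 M), 1:]"
proof -
  obtain a b c d where M: "M = mk2 a b c d" using mk2_eta by blast
  have t: "trace (adj M ** M) = complex_of_real (frob2 M)"
  proof -
    have "trace (adj M ** M) = a * cnj a + c * cnj c + (b * cnj b + d * cnj d)" unfolding M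
      by (simp add: mult.commute)
    also have "\<dots> = complex_of_real (frob2 M)" unfolding M frob2_mk2 of_real_add cm_sq by simp
    finally show ?thesis .
  qed
  have "det (adj M ** M) = cnj (det M) * det M" unfolding M by (simp add: algebra_simps)
  then have dt: "det (adj M ** M) = complex_of_real ((dd M)^2)"
    unfolding dd_def cm_sq by (simp add: mult.commute)
  have "frob2 M = r1 M + r2 M" "(dd M)^2 = r1 M * r2 M" using r_props[of M] by auto
  then show ?thesis unfolding charpoly2 t dt by (simp add: algebra_simps)
qed

lemma sing_vals: "sing_val M 1 = sqrt (r1 M)" "sing_val M 2 = sqrt (r2 M)"
proof -
  have le: "sqrt (r2 M) \<le> sqrt (r1 M)" using r_props[of M] by simp
  have "singular_values M = [sqrt (r1 M), sqrt (r2 M)]"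
    unfolding singular_values_def eig_mset2[OF charpoly_gram] using le
    by (auto simp: add_mset_commute)
  then show "sing_val M 1 = sqrt (r1 M)" "sing_val M 2 = sqrt (r2 M)"
    unfolding sing_val_def by simp_all
qed

lemma adj_mult: "adj (X ** Y) = adj Y ** adj (X::complex^2^2)"
proof -
  obtain a b c d where X: "X = mk2 a b c d" using mk2_eta by blast
  obtain a' b' c' d' where Y: "Y = mk2 a' b' c' d'" using mk2_eta by blast
  show ?thesis unfolding X Y by (simp add: mult.commute)
qed

lemma adj_adj[simp]: "adj (adj X) = (X::complex^2^2)"
  by (simp add: adj_def vec_eq_iff)

lemma adj_mat[simp]: "adj (mat z :: complex^2^2) = mat (cnj z)"
  by (simp add: mk2_mat)

lemma adj_diff: "adj (X - Y) = adj X - adj (Y::complex^2^2)"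
  by (simp add: adj_def vec_eq_iff)

lemma unitary_right: "unitary_mat (U::complex^2^2) \<Longrightarrow> U ** adj U = mat 1"
  unfolding unitary_mat_def using matrix_left_right_inverse by blast

lemma unitary_adj: "unitary_mat (U::complex^2^2) \<Longrightarrow> unitary_mat (adj U)"
  using unitary_right unfolding unitary_mat_def by simp

lemma unitary_mult: "unitary_mat (U::complex^2^2) \<Longrightarrow> unitary_mat V \<Longrightarrow> unitary_mat (U ** V)"
  unfolding unitary_mat_def adj_mult
  by (metis matrix_mul_assoc matrix_mul_lid)

lemma mat_comm: "adj U ** mat z ** U = mat z ** (adj U ** (U::complex^2^2))"
proof -
  obtain a b c d where U: "U = mk2 a b c d" using mk2_eta by blast
  show ?thesis unfolding U mk2_mat by (simp add: algebra_simps)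
qed

lemma sub_distrib: "adj U ** (X - Y) ** U = adj U ** X ** U - adj U ** Y ** (U::complex^2^2)"
proof -
  obtain a b c d where U: "U = mk2 a b c d" using mk2_eta by blast
  obtain a' b' c' d' where X: "X = mk2 a' b' c' d'" using mk2_eta by blast
  obtain a2 b2 c2 d2 where Y: "Y = mk2 a2 b2 c2 d2" using mk2_eta by blast
  show ?thesis unfolding U X Y by (simp add: algebra_simps)
qed

lemma conj_mat_z: "unitary_mat U \<Longrightarrow> adj U ** (mat z - A) ** U = mat z - adj U ** A ** (U::complex^2^2)"
  unfolding sub_distrib mat_comm unitary_mat_def by simp

lemma trace_conj: "unitary_mat U \<Longrightarrow> trace (adj U ** A ** U) = trace (A::complex^2^2)"
proof -
  assume u: "unitary_mat U"
  have "trace (adj U ** A ** U) = trace (U ** (adj U ** A))" by (rule trace_mul_sym)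
  also have "\<dots> = trace ((U ** adj U) ** A)" by (simp add: matrix_mul_assoc)
  also have "\<dots> = trace A" using unitary_right[OF u] by simp
  finally show ?thesis .
qed

lemma det_conj: "unitary_mat U \<Longrightarrow> det (adj U ** A ** U) = det (A::complex^2^2)"
proof -
  assume u: "unitary_mat U"
  have "det (adj U ** A ** U) = det A * (det (adj U) * det U)" by (simp add: det_mul)
  also have "\<dots> = det A * det (adj U ** U)" by (simp add: det_mul)
  also have "\<dots> = det A" using u unfolding unitary_mat_def by (simp add: mk2_mat)
  finally show ?thesis .
qed

lemma frob_trace: "complex_of_real (frob2 M) = trace (adj M ** M)"
proof -
  obtain a b c d where M: "M = mk2 a b c d" using mk2_eta by blast
  show ?thesis unfolding M frob2_mk2 of_real_add cm_sq by (simp add: mult.commute)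
qed

lemma frob_conj: "unitary_mat (U::complex^2^2) \<Longrightarrow> frob2 (adj U ** A ** U) = frob2 A"
proof -
  assume u: "unitary_mat U"
  have "adj (adj U ** A ** U) ** (adj U ** A ** U) = adj U ** (adj A ** A) ** U"
    using unitary_right[OF u] unfolding adj_mult adj_adj
    by (metis matrix_mul_assoc matrix_mul_lid)
  then have "complex_of_real (frob2 (adj U ** A ** U)) = complex_of_real (frob2 A)"
    unfolding frob_trace using trace_conj[OF u] by simp
  then show ?thesis using of_real_eq_iff by blast
qed

lemma dd_conj: "unitary_mat (U::complex^2^2) \<Longrightarrow> dd (adj U ** A ** U) = dd A"
  unfolding dd_def using det_conj by simp

lemma r1_conj: "unitary_mat (U::complex^2^2) \<Longrightarrow> r1 (adj U ** A ** U) = r1 A"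
  unfolding r1_def using dd_conj frob_conj by simp
lemma r2_conj: "unitary_mat (U::complex^2^2) \<Longrightarrow> r2 (adj U ** A ** U) = r2 A"
  unfolding r2_def using dd_conj frob_conj by simp

lemma spec_norm_conj: "unitary_mat (U::complex^2^2) \<Longrightarrow> spec_norm (adj U ** A ** U) = spec_norm A"
  unfolding spec_norm_formula using r1_conj by simp

lemma mat_pow_0[simp]: "mat_pow A 0 = mat 1" by (simp add: mat_pow_def)
lemma mat_pow_Suc[simp]: "mat_pow A (Suc k) = A ** mat_pow A k" by (simp add: mat_pow_def)

lemma mat_pow_conj:
  assumes u: "unitary_mat (U::complex^2^2)"
  shows "mat_pow (adj U ** A ** U) k = adj U ** mat_pow A k ** U"
proof (induction k)
  case 0
  then show ?case using u unfolding unitary_mat_def by simp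
next
  case (Suc k)
  have "mat_pow (adj U ** A ** U) (Suc k) = (adj U ** A ** U) ** (adj U ** mat_pow A k ** U)"
    using Suc by simp
  also have "\<dots> = adj U ** A ** (U ** adj U) ** mat_pow A k ** U" by (simp add: matrix_mul_assoc)
  also have "\<dots> = adj U ** mat_pow A (Suc k) ** U" using unitary_right[OF u] by (simp add: matrix_mul_assoc)
  finally show ?case .
qed

lemma mat_scal_conj: "mat c ** (adj U ** X ** U) = adj U ** (mat c ** X) ** (U::complex^2^2)"
proof -
  obtain a b c d where U: "U = mk2 a b c d" using mk2_eta by blast
  obtain a' b' c' d' where X: "X = mk2 a' b' c' d'" using mk2_eta by blast
  show ?thesis unfolding U X mk2_mat by (simp add: algebra_simps)
qed

lemma add_conj: "adj U ** (X + Y) ** U = adj U ** X ** U + adj U ** Y ** (U::complex^2^2)"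
proof -
  obtain a b c d where U: "U = mk2 a b c d" using mk2_eta by blast
  obtain a' b' c' d' where X: "X = mk2 a' b' c' d'" using mk2_eta by blast
  obtain a2 b2 c2 d2 where Y: "Y = mk2 a2 b2 c2 d2" using mk2_eta by blast
  show ?thesis unfolding U X Y by (simp add: algebra_simps)
qed

lemma zero_conj: "adj U ** 0 ** U = (0::complex^2^2)"
  by (simp add: mk2_zero[symmetric] vec_eq_iff matrix_matrix_mult_def)

lemma sum_conj: "adj U ** (\<Sum>k\<le>(n::nat). f k) ** U = (\<Sum>k\<le>n. adj U ** f k ** (U::complex^2^2))"
proof (induction n)
  case 0 then show ?case by simp
next
  case (Suc n) then show ?case by (simp add: add_conj)
qed

lemma poly_mat_conj:
  assumes u: "unitary_mat (U::complex^2^2)"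
  shows "poly_mat p (adj U ** A ** U) = adj U ** poly_mat p A ** U"
  unfolding poly_mat_def sum_conj mat_pow_conj[OF u] mat_scal_conj ..

lemma poly_mat_lin: "poly_mat [:-\<mu>, 1:] M = M - mat (\<mu>::complex)" for M :: "complex^2^2"
proof -
  have "poly_mat [:-\<mu>, 1:] M = mat (-\<mu>) ** mat 1 + mat 1 ** (M ** mat 1)"
    by (simp add: poly_mat_def)
  also have "\<dots> = M - mat \<mu>"
    using mk2_eta[of M] by (metis (no_types) matrix_mul_lid matrix_mul_rid add.commute diff_conv_add_uminus mk2_mat mk2_uminus minus_zero)
  finally show ?thesis .
qed

lemma poly_mat_lin2: "c1 \<noteq> 0 \<Longrightarrow> poly_mat [:c0, c1:] M = mat c0 + mat c1 ** M" for M :: "complex^2^2"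
  by (simp add: poly_mat_def)

lemma poly_mat_quad: "poly_mat [:c0, c1, 1:] M = mat c0 + mat c1 ** M + M ** M" for M :: "complex^2^2"
  by (simp add: poly_mat_def numeral_2_eq_2)

lemma eigvec_raw:
  fixes a b c d l :: complex
  assumes "l^2 - (a+d)*l + (a*d - b*c) = 0"
  shows "\<exists>w1 w2. (w1 \<noteq> 0 \<or> w2 \<noteq> 0) \<and> a*w1 + b*w2 = l*w1 \<and> c*w1 + d*w2 = l*w2"
proof (cases "b \<noteq> 0 \<or> l \<noteq> a")
  case True
  have "c*b + d*(l-a) = l*(l-a)"
  proof -
    have "l*(l-a) - (c*b + d*(l-a)) = l^2 - (a+d)*l + (a*d - b*c)" by (simp add: algebra_simps power2_eq_square)
    then show ?thesis using assms by simp
  qed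
  moreover have "a*b + b*(l-a) = l*b" by (simp add: algebra_simps)
  ultimately show ?thesis using True by (intro exI[of _ b] exI[of _ "l-a"]) auto
next
  case False
  then have b: "b = 0" and la: "l = a" by auto
  show ?thesis
  proof (cases "c \<noteq> 0 \<or> l \<noteq> d")
    case True
    have "a*(l-d) + b*c = l*(l-d)" "c*(l-d) + d*c = l*c" using b la by (simp_all add: algebra_simps)
    then show ?thesis using True by (intro exI[of _ "l-d"] exI[of _ c]) auto
  next
    case False
    then show ?thesis using b la by (intro exI[of _ 1] exI[of _ 0]) auto
  qed
qed

lemma eigvec:
  fixes a b c d l :: complex
  assumes "l^2 - (a+d)*l + (a*d - b*c) = 0"
  shows "\<exists>e1 e2. (cmod e1)^2 + (cmod e2)^2 = 1 \<and> a*e1 + b*e2 = l*e1 \<and> c*e1 + d*e2 = l*e2"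
proof -
  obtain w1 w2 where w: "w1 \<noteq> 0 \<or> w2 \<noteq> 0" "a*w1 + b*w2 = l*w1" "c*w1 + d*w2 = l*w2"
    using eigvec_raw[OF assms] by blast
  define n where "n = sqrt ((cmod w1)^2 + (cmod w2)^2)"
  have pos: "(cmod w1)^2 + (cmod w2)^2 > 0" using w(1)
    by (metis add_nonneg_pos add_pos_nonneg norm_eq_zero zero_less_norm_iff zero_less_power zero_le_power2)
  then have n0: "n > 0" unfolding n_def by simp
  have nsq: "n^2 = (cmod w1)^2 + (cmod w2)^2" unfolding n_def using pos by simp
  define e1 where "e1 = w1 / complex_of_real n"
  define e2 where "e2 = w2 / complex_of_real n"
  have "(cmod e1)^2 + (cmod e2)^2 = ((cmod w1)^2 + (cmod w2)^2) / n^2"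
    unfolding e1_def e2_def using n0 by (simp add: norm_divide power_divide add_divide_distrib)
  also have "\<dots> = 1" unfolding nsq[symmetric] using n0 by simp
  finally have "(cmod e1)^2 + (cmod e2)^2 = 1" .
  moreover have "a*e1 + b*e2 = l*e1" using w(2) unfolding e1_def e2_def
    by (simp add: add_divide_distrib[symmetric])
  moreover have "c*e1 + d*e2 = l*e2" using w(3) unfolding e1_def e2_def
    by (simp add: add_divide_distrib[symmetric])
  ultimately show ?thesis by blast
qed

lemma schur:
  fixes A :: "complex^2^2"
  assumes "l^2 - trace A * l + det A = 0"
  shows "\<exists>U c. unitary_mat U \<and> 0 \<le> c \<and> adj U ** A ** U = mk2 l (complex_of_real c) 0 (trace A - l)"
proof -
  obtain a b c d where A: "A = mk2 a b c d" using mk2_eta by blast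
  obtain e1 e2 where v: "(cmod e1)^2 + (cmod e2)^2 = 1" "a*e1 + b*e2 = l*e1" "c*e1 + d*e2 = l*e2"
    using eigvec[of l a d b c] assms unfolding A by auto
  have hv: "cnj e1 * e1 + cnj e2 * e2 = 1"
  proof -
    have "complex_of_real ((cmod e1)^2 + (cmod e2)^2) = 1" using v(1) by simp
    then show ?thesis unfolding of_real_add cm_sq by (simp add: mult.commute)
  qed
  define w0 where "w0 = cnj e1 * (-a*cnj e2 + b*cnj e1) + cnj e2 * (-c*cnj e2 + d*cnj e1)"
  define om where "om = (if w0 = 0 then 1 else cnj w0 / complex_of_real (cmod w0))"
  have hom: "cnj om * om = 1"
  proof (cases "w0 = 0")
    case True then show ?thesis unfolding om_def by simp
  next
    case False
    have "cnj om * om = (w0 * cnj w0) / (complex_of_real (cmod w0))^2"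
      unfolding om_def using False by (simp add: power2_eq_square mult.commute)
    also have "\<dots> = 1" unfolding cm_sq[symmetric] using False by simp
    finally show ?thesis .
  qed
  have hw: "om * w0 = complex_of_real (cmod w0)"
  proof (cases "w0 = 0")
    case True then show ?thesis unfolding om_def by simp
  next
    case False
    have "om * w0 = (w0 * cnj w0) / complex_of_real (cmod w0)"
      unfolding om_def using False by (simp add: mult.commute)
    also have "\<dots> = complex_of_real (cmod w0)" unfolding cm_sq[symmetric] using False
      by (simp add: power2_eq_square)
    finally show ?thesis .
  qed
  define U where "U = mk2 e1 (-om*cnj e2) e2 (om*cnj e1)"
  have "adj U ** U = mk2 (cnj e1 * e1 + cnj e2 * e2) (cnj e1 * (-om*cnj e2) + cnj e2 * (om*cnj e1))
     (cnj (-om*cnj e2) * e1 + cnj (om * cnj e1) * e2)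
     (cnj (-om*cnj e2) * (-om*cnj e2) + cnj (om * cnj e1) * (om*cnj e1))"
    unfolding U_def by simp
  also have "\<dots> = mk2 1 0 0 1"
  proof -
    have "cnj (-om*cnj e2) * (-om*cnj e2) + cnj (om * cnj e1) * (om*cnj e1) = (cnj om * om) * (cnj e1 * e1 + cnj e2 * e2)"
      by (simp add: algebra_simps)
    then have x22: "cnj (-om*cnj e2) * (-om*cnj e2) + cnj (om * cnj e1) * (om*cnj e1) = 1"
      using hv hom by simp
    have x12: "cnj e1 * (-om*cnj e2) + cnj e2 * (om*cnj e1) = 0" by (simp add: algebra_simps)
    have x21: "cnj (-om*cnj e2) * e1 + cnj (om * cnj e1) * e2 = 0" by (simp add: algebra_simps)
    show ?thesis by (simp only: hv x12 x21 x22)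
  qed
  finally have uU: "unitary_mat U" unfolding unitary_mat_def by (simp add: mk2_mat)
  define T where "T = adj U ** A ** U"
  have T11: "T$1$1 = l"
  proof -
    have "T$1$1 = cnj e1 * (a*e1 + b*e2) + cnj e2 * (c*e1 + d*e2)"
      unfolding T_def U_def A by (simp add: algebra_simps)
    also have "\<dots> = l * (cnj e1 * e1 + cnj e2 * e2)" unfolding v(2,3) by (simp add: algebra_simps)
    finally show ?thesis using hv by simp
  qed
  have T21: "T$2$1 = 0"
  proof -
    have "T$2$1 = cnj om * (e1 * (c*e1 + d*e2) - e2 * (a*e1 + b*e2))"
      unfolding T_def U_def A by (simp add: algebra_simps)
    also have "\<dots> = 0" unfolding v(2,3) by (simp add: algebra_simps)
    finally show ?thesis .
  qed
  have T12: "T$1$2 = complex_of_real (cmod w0)"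
  proof -
    have "T$1$2 = om * w0"
      unfolding T_def U_def A w0_def by (simp add: algebra_simps)
    then show ?thesis using hw by simp
  qed
  have "T$1$1 + T$2$2 = trace A" using trace_conj[OF uU, of A] unfolding T_def[symmetric]
    using mk2_eta[of T] by (metis mk2_trace)
  then have T22: "T$2$2 = trace A - l" using T11 by (simp add: algebra_simps)
  have "T = mk2 l (complex_of_real (cmod w0)) 0 (trace A - l)"
    using mk2_eta[of T] T11 T12 T21 T22 by simp
  then show ?thesis using uU unfolding T_def by (intro exI[of _ U] exI[of _ "cmod w0"]) auto
qed

lemma us_sym: "unitarily_similar A B \<Longrightarrow> unitarily_similar B (A::complex^2^2)"
  unfolding unitarily_similar_def
proof (elim exE conjE)
  fix U assume u: "unitary_mat U" "B = adj U ** A ** U"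
  have "adj (adj U) ** B ** adj U = A"
    unfolding u(2) adj_adj using unitary_right[OF u(1)]
    by (metis matrix_mul_assoc matrix_mul_lid matrix_mul_rid unitary_mat_def u(1))
  then show "\<exists>V. unitary_mat V \<and> A = adj V ** B ** V" using unitary_adj[OF u(1)] by metis
qed

lemma us_trans: "unitarily_similar A B \<Longrightarrow> unitarily_similar B C \<Longrightarrow> unitarily_similar A (C::complex^2^2)"
  unfolding unitarily_similar_def
proof (elim exE conjE)
  fix U V assume u: "unitary_mat U" "B = adj U ** A ** U" and v: "unitary_mat V" "C = adj V ** B ** V"
  have "C = adj (U ** V) ** A ** (U ** V)" unfolding v(2) u(2) adj_mult by (simp add: matrix_mul_assoc)
  then show "\<exists>W. unitary_mat W \<and> C = adj W ** A ** W" using unitary_mult[OF u(1) v(1)] by blast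
qed

lemma key_us:
  fixes A B :: "complex^2^2"
  assumes t: "trace A = trace B" and d: "det A = det B" and f: "frob2 A = frob2 B"
  shows "unitarily_similar A B"
proof -
  define s where "s = csqrt ((trace A)^2 - 4 * det A)"
  define l where "l = (trace A + s) / 2"
  have "l^2 - trace A * l + det A = (s^2 - (trace A)^2) / 4 + det A"
    unfolding l_def by (simp add: field_simps power2_eq_square)
  also have "\<dots> = 0" unfolding s_def power2_csqrt by (simp add: field_simps)
  finally have lA: "l^2 - trace A * l + det A = 0" by simp
  then have lB: "l^2 - trace B * l + det B = 0" using t d by simp
  obtain U c where U: "unitary_mat U" "0 \<le> c" "adj U ** A ** U = mk2 l (complex_of_real c) 0 (trace A - l)"
    using schur[OF lA] by blast
  obtain V c' where V: "unitary_mat V" "0 \<le> c'" "adj V ** B ** V = mk2 l (complex_of_real c') 0 (trace B - l)"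
    using schur[OF lB] by blast
  have "frob2 (mk2 l (complex_of_real c) 0 (trace A - l)) = frob2 (mk2 l (complex_of_real c') 0 (trace B - l))"
    using frob_conj[OF U(1), of A] frob_conj[OF V(1), of B] U(3) V(3) f by simp
  then have "c^2 = c'^2" using t by simp
  then have "c = c' \<or> c = - c'" by (simp add: power2_eq_iff)
  then have "c = c'" using U(2) V(2) by auto
  then have eq: "adj U ** A ** U = adj V ** B ** V" using U(3) V(3) t by simp
  have "unitarily_similar A (adj U ** A ** U)" unfolding unitarily_similar_def using U(1) by blast
  moreover have "unitarily_similar (adj V ** B ** V) B"
    using us_sym[of B "adj V ** B ** V"] unfolding unitarily_similar_def using V(1) by blast
  ultimately show ?thesis using eq us_trans by metis
qed

lemma detz: "det (mat z - M) = z^2 - trace M * z + det (M::complex^2^2)"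
proof -
  obtain a b c d where M: "M = mk2 a b c d" using mk2_eta by blast
  show ?thesis unfolding M mk2_mat by (simp add: algebra_simps power2_eq_square)
qed

lemma factor_quad: "\<exists>l1 l2. l1 + l2 = t \<and> l1 * l2 = (dl::complex)"
proof -
  define s where "s = csqrt (t^2 - 4 * dl)"
  have "(t + s)/2 + (t - s)/2 = t" by (simp add: field_simps)
  moreover have "(t + s)/2 * ((t - s)/2) = (t^2 - s^2)/4" by (simp add: field_simps power2_eq_square)
  moreover have "(t^2 - s^2)/4 = dl" unfolding s_def power2_csqrt by simp
  ultimately show ?thesis by metis
qed

lemma det_factor:
  fixes M :: "complex^2^2"
  obtains l1 l2 where "\<And>z. det (mat z - M) = (z - l1) * (z - l2)" "l1 + l2 = trace M" "l1 * l2 = det M"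
proof -
  obtain l1 l2 where l: "l1 + l2 = trace M" "l1 * l2 = det M" using factor_quad by blast
  have "det (mat z - M) = (z - l1) * (z - l2)" for z
    unfolding detz l(1)[symmetric] l(2)[symmetric] by (simp add: algebra_simps power2_eq_square)
  then show ?thesis using that l by blast
qed

lemma roots_eq:
  fixes A B :: "complex^2^2"
  assumes h: "\<And>z. det (mat z - A) = 0 \<longleftrightarrow> det (mat z - B) = 0"
  shows "trace A = trace B \<and> det A = det B"
proof -
  obtain l1 l2 where l: "\<And>z. det (mat z - A) = (z - l1) * (z - l2)" "l1 + l2 = trace A" "l1 * l2 = det A"
    using det_factor by blast
  obtain m1 m2 where m: "\<And>z. det (mat z - B) = (z - m1) * (z - m2)" "m1 + m2 = trace B" "m1 * m2 = det B"
    using det_factor by blast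
  have h': "(z - l1) * (z - l2) = 0 \<longleftrightarrow> (z - m1) * (z - m2) = 0" for z
    using h[of z] unfolding l(1) m(1) .
  have "l1 = m1 \<or> l1 = m2" using h'[of l1] by simp
  moreover have "l2 = m1 \<or> l2 = m2" using h'[of l2] by simp
  moreover have "m1 = l1 \<or> m1 = l2" using h'[of m1] by simp
  moreover have "m2 = l1 \<or> m2 = l2" using h'[of m2] by simp
  ultimately have "l1 + l2 = m1 + m2 \<and> l1 * l2 = m1 * m2" by (auto simp: mult.commute add.commute)
  then show ?thesis using l m by simp
qed

lemma nonroot: "\<exists>z. det (mat z - (A::complex^2^2)) \<noteq> 0"
proof (rule ccontr)
  assume "\<not> ?thesis"
  then have h: "z^2 - trace A * z + det A = 0" for z unfolding detz by blast
  have "det A = 0" using h[of 0] by simp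
  moreover have "1 - trace A + det A = 0" using h[of 1] by simp
  moreover have "4 - 2 * trace A + det A = 0" using h[of 2] by (simp add: power2_eq_square algebra_simps)
  ultimately show False by (simp add: algebra_simps)
qed

lemma matrix_inv_eq:
  fixes M X :: "complex^2^2"
  assumes "M ** X = mat 1" "X ** M = mat 1"
  shows "matrix_inv M = X"
proof -
  have ex: "\<exists>Y. M ** Y = mat 1 \<and> Y ** M = mat 1" using assms by blast
  define Y where "Y = matrix_inv M"
  have Y: "M ** Y = mat 1 \<and> Y ** M = mat 1" unfolding Y_def matrix_inv_def using someI_ex[OF ex] .
  have "Y = Y ** (M ** X)" using assms by simp
  also have "\<dots> = (Y ** M) ** X" by (simp add: matrix_mul_assoc)
  also have "\<dots> = X" using Y by simp
  finally show ?thesis unfolding Y_def .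
qed

lemma inv2:
  fixes a b c d :: complex
  assumes "D' \<noteq> 0" "D' = a*d - b*c"
  shows "matrix_inv (mk2 a b c d) = mk2 (d/D') (-b/D') (-c/D') (a/D')"
proof (rule matrix_inv_eq)
  show "mk2 a b c d ** mk2 (d/D') (-b/D') (-c/D') (a/D') = mat 1"
    unfolding mk2_mat mk2_mult mk2_eq
    by (simp add: field_simps assms(1), simp_all add: assms(2) algebra_simps)
  show "mk2 (d/D') (-b/D') (-c/D') (a/D') ** mk2 a b c d = mat 1"
    unfolding mk2_mat mk2_mult mk2_eq
    by (simp add: field_simps assms(1), simp_all add: assms(2) algebra_simps)
qed

lemma frob_inv:
  fixes M :: "complex^2^2"
  assumes "det M \<noteq> 0"
  shows "frob2 (matrix_inv M) = frob2 M / (cmod (det M))^2" "dd (matrix_inv M) = 1 / cmod (det M)"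
proof -
  obtain a b c d where M: "M = mk2 a b c d" using mk2_eta by blast
  define D' where "D' = a*d - b*c"
  have D: "D' \<noteq> 0" using assms unfolding M D'_def by simp
  have dM: "det M = D'" unfolding M D'_def by simp
  show "frob2 (matrix_inv M) = frob2 M / (cmod (det M))^2"
    unfolding M inv2[OF D D'_def] unfolding dM[unfolded M] using D
    by (simp add: norm_divide power_divide add_divide_distrib)
  have "(d/D') * (a/D') - (-b/D') * (-c/D') = 1 / D'"
    by (simp add: field_simps D power2_eq_square, simp add: D'_def algebra_simps)
  then show "dd (matrix_inv M) = 1 / cmod (det M)"
    unfolding M inv2[OF D D'_def] dd_mk2 unfolding dM[unfolded M] by (simp add: norm_divide)
qed

lemma resolvent_inf: "resolvent_norm M z = \<infinity> \<longleftrightarrow> det (mat z - M) = 0"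
  unfolding resolvent_norm_def invertible_det_nz by simp

lemma resolvent_fin: "det (mat z - M) \<noteq> 0 \<Longrightarrow> resolvent_norm M z = ereal (spec_norm (matrix_inv (mat z - M)))"
  unfolding resolvent_norm_def invertible_det_nz by simp

lemma spec_norm_sq: "(spec_norm M)^2 = r1 M"
  unfolding spec_norm_formula using r1_nonneg by simp

lemma frob_from_norm:
  assumes "0 < spec_norm M"
  shows "frob2 M = (spec_norm M)^2 + (dd M)^2 / (spec_norm M)^2"
proof -
  have p: "r1 M > 0" using assms spec_norm_sq[of M] by (metis zero_less_power)
  have "frob2 M = r1 M + r2 M" "(dd M)^2 = r1 M * r2 M" using r_props[of M] by auto
  then show ?thesis unfolding spec_norm_sq using p by simp
qed

lemma frob_zero: "frob2 M = 0 \<longleftrightarrow> M = 0"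
proof -
  obtain a b c d where M: "M = mk2 a b c d" using mk2_eta by blast
  have "(cmod a)^2 + (cmod b)^2 + (cmod c)^2 + (cmod d)^2 = 0 \<longleftrightarrow> a = 0 \<and> b = 0 \<and> c = 0 \<and> d = 0"
  proof
    assume h: "(cmod a)^2 + (cmod b)^2 + (cmod c)^2 + (cmod d)^2 = 0"
    have "(cmod a)^2 = 0" "(cmod b)^2 = 0" "(cmod c)^2 = 0" "(cmod d)^2 = 0"
      using h by (smt (verit) zero_le_power2)+
    then show "a = 0 \<and> b = 0 \<and> c = 0 \<and> d = 0" by simp
  qed simp
  then show ?thesis unfolding M frob2_mk2 mk2_zero mk2_eq by simp
qed

lemma spec_norm_zero: "spec_norm M = 0 \<longleftrightarrow> M = (0::complex^2^2)"
proof -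
  have F0: "0 \<le> frob2 M" using F_ge[of M] dd_nonneg[of M] by linarith
  have s0: "0 \<le> sqrt ((frob2 M)^2 - 4 * (dd M)^2)" using disc_nonneg[of M] by simp
  have "spec_norm M = 0 \<longleftrightarrow> r1 M = 0" unfolding spec_norm_formula by simp
  also have "\<dots> \<longleftrightarrow> frob2 M = 0"
  proof
    assume "r1 M = 0"
    then have "frob2 M + sqrt ((frob2 M)^2 - 4 * (dd M)^2) = 0" unfolding r1_def by simp
    then show "frob2 M = 0" using F0 s0 by linarith
  next
    assume f: "frob2 M = 0"
    then have "dd M = 0" using F_ge[of M] dd_nonneg[of M] by linarith
    then show "r1 M = 0" unfolding r1_def using f by simp
  qed
  finally show ?thesis using frob_zero by simp
qed

lemma frob_shift_id: "complex_of_real (frob2 (mat z - M)) = complex_of_real (frob2 M) + 2 * z * cnj z - cnj z * trace M - z * cnj (trace M)"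
proof -
  obtain a b c d where M: "M = mk2 a b c d" using mk2_eta by blast
  show ?thesis unfolding M mk2_mat mk2_diff frob2_mk2 of_real_add cm_sq by (simp add: algebra_simps)
qed

lemma frob_shift:
  assumes "trace A = trace B" "frob2 (mat z - A) = frob2 (mat z - B)"
  shows "frob2 A = frob2 B"
proof -
  have "complex_of_real (frob2 A) = complex_of_real (frob2 B)"
    using frob_shift_id[of z A] frob_shift_id[of z B] assms by simp
  then show ?thesis using of_real_eq_iff by blast
qed

lemma r2_zero: "r2 M = 0 \<longleftrightarrow> det M = 0"
proof -
  have p: "r1 M * r2 M = (dd M)^2" "0 \<le> r2 M" "r2 M \<le> r1 M" using r_props[of M] by auto
  show ?thesis
  proof
    assume "r2 M = 0" then show "det M = 0" using p(1) unfolding dd_def by simp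
  next
    assume "det M = 0"
    then have "r1 M * r2 M = 0" using p(1) unfolding dd_def by simp
    then show "r2 M = 0" using p(2,3) by (metis mult_eq_0_iff order_antisym)
  qed
qed

lemma P4_P2:
  fixes A B :: "complex^2^2"
  assumes "unitarily_similar A B"
  shows "spec_norm (poly_mat p A) = spec_norm (poly_mat p B)"
proof -
  obtain U where U: "unitary_mat U" "B = adj U ** A ** U" using assms unfolding unitarily_similar_def by blast
  show ?thesis unfolding U(2) poly_mat_conj[OF U(1)] spec_norm_conj[OF U(1)] ..
qed

lemma sing_list: "singular_values M = [sqrt (r1 M), sqrt (r2 M)]"
proof -
  have le: "sqrt (r2 M) \<le> sqrt (r1 M)" using r_props[of M] by simp
  show ?thesis
    unfolding singular_values_def eig_mset2[OF charpoly_gram] using le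
    by (auto simp: add_mset_commute)
qed

lemma P4_P3:
  fixes A B :: "complex^2^2"
  assumes "unitarily_similar A B"
  shows "sing_val (mat z - A) k = sing_val (mat z - B) k"
proof -
  obtain U where U: "unitary_mat U" "B = adj U ** A ** U" using assms unfolding unitarily_similar_def by blast
  have e: "mat z - B = adj U ** (mat z - A) ** U" unfolding U(2) conj_mat_z[OF U(1)] ..
  have "r1 (mat z - B) = r1 (mat z - A)" "r2 (mat z - B) = r2 (mat z - A)"
    unfolding e using r1_conj[OF U(1)] r2_conj[OF U(1)] by auto
  then have "singular_values (mat z - B) = singular_values (mat z - A)"
    unfolding sing_list by simp
  then show ?thesis unfolding sing_val_def by simp
qed

lemma scalar_case:
  fixes A B :: "complex^2^2"
  assumes h: "\<And>p. spec_norm (poly_mat p A) = spec_norm (poly_mat p B)" and A: "A = mat \<mu>"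
  shows "B = A"
proof -
  have "spec_norm (poly_mat [:-\<mu>, 1:] A) = 0" unfolding poly_mat_lin A by (simp add: spec_norm_zero)
  then have "poly_mat [:-\<mu>, 1:] B = 0" using h spec_norm_zero by metis
  then show ?thesis unfolding poly_mat_lin A by simp
qed

lemma cayley_hamilton: "poly_mat [:det M, - trace M, 1:] M = (0::complex^2^2)"
proof -
  obtain a b c d where M: "M = mk2 a b c d" using mk2_eta by blast
  show ?thesis unfolding poly_mat_quad M mk2_mat mk2_zero by (simp add: algebra_simps)
qed

lemma res_poly:
  fixes M :: "complex^2^2"
  assumes "det (mat z - M) \<noteq> 0"
  shows "matrix_inv (mat z - M) = poly_mat [:(z - trace M) / det (mat z - M), 1 / det (mat z - M):] M"
proof -
  obtain a b c d where M: "M = mk2 a b c d" using mk2_eta by blast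
  define D' where "D' = det (mat z - M)"
  have D: "D' \<noteq> 0" using assms unfolding D'_def .
  have D1: "1 / D' \<noteq> 0" using D by simp
  have D2: "D' = (z - a) * (z - d) - (-b) * (-c)" unfolding D'_def M mk2_mat by simp
  have "matrix_inv (mat z - M) = mk2 ((z-d)/D') (-(-b)/D') (-(-c)/D') ((z-a)/D')"
    unfolding M mk2_mat mk2_diff using inv2[OF D D2] by simp
  also have "\<dots> = poly_mat [:(z - trace M) / D', 1 / D':] M"
    unfolding poly_mat_lin2[of "1/D'", OF D1]
    unfolding M mk2_mat mk2_trace by (simp add: field_simps D)
  finally show ?thesis unfolding D'_def .
qed

lemma P2_P1:
  fixes A B :: "complex^2^2"
  assumes h: "\<And>p. spec_norm (poly_mat p A) = spec_norm (poly_mat p B)"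
  shows "resolvent_norm A z = resolvent_norm B z"
proof (cases "(\<exists>\<mu>. A = mat \<mu>) \<or> (\<exists>\<mu>. B = mat \<mu>)")
  case True
  have h': "\<And>p. spec_norm (poly_mat p B) = spec_norm (poly_mat p A)" using h by simp
  from True have "B = A"
  proof (elim disjE exE)
    fix \<mu> assume "A = mat \<mu>" then show "B = A" using scalar_case[OF h] by blast
  next
    fix \<mu> assume "B = mat \<mu>" then show "B = A" using scalar_case[OF h'] by metis
  qed
  then show ?thesis by simp
next
  case False
  then have nA: "\<And>\<mu>. A \<noteq> mat \<mu>" and nB: "\<And>\<mu>. B \<noteq> mat \<mu>" by auto
  have sn0: "spec_norm (0::complex^2^2) = 0" by (simp add: spec_norm_zero)
  have "spec_norm (poly_mat [:det A, - trace A, 1:] B) = 0"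
    using h[of "[:det A, - trace A, 1:]"] cayley_hamilton[of A] sn0 by simp
  then have chB: "poly_mat [:det A, - trace A, 1:] B = 0" using spec_norm_zero by blast
  have td: "trace A = trace B \<and> det A = det B"
  proof -
    obtain a b c d where B: "B = mk2 a b c d" using mk2_eta by blast
    have e1: "mat (det A) + mat (- trace A) ** B + B ** B = 0" using chB unfolding poly_mat_quad .
    have e2: "mat (det B) + mat (- trace B) ** B + B ** B = 0" using cayley_hamilton[of B] unfolding poly_mat_quad .
    have "mat (det A - det B) + mat (trace B - trace A) ** B = 0"
    proof -
      have "mat (det A - det B) + mat (trace B - trace A) ** B =
        (mat (det A) + mat (- trace A) ** B + B ** B) - (mat (det B) + mat (- trace B) ** B + B ** B)"
        unfolding B mk2_mat by (simp add: algebra_simps)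
      then show ?thesis using e1 e2 by simp
    qed
    then have E: "(det A - det B) + (trace B - trace A) * a = 0" "(trace B - trace A) * b = 0"
      "(trace B - trace A) * c = 0" "(det A - det B) + (trace B - trace A) * d = 0"
      unfolding B mk2_mat mk2_zero by simp_all
    have "trace B = trace A"
    proof (rule ccontr)
      assume ne: "trace B \<noteq> trace A"
      then have "b = 0" "c = 0" using E by simp_all
      moreover have "a = d"
      proof -
        have "(trace B - trace A) * a = (trace B - trace A) * d" using arg_cong2[where f="(-)", OF E(1) E(4)] by (simp add: algebra_simps)
        then show ?thesis using ne by simp
      qed
      ultimately have "B = mat a" unfolding B mk2_mat by simp
      then show False using nB by blast
    qed
    then show ?thesis using E(1) by simp
  qed
  then have dz: "det (mat z - A) = det (mat z - B)" unfolding detz by simp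
  show ?thesis
  proof (cases "det (mat z - A) = 0")
    case True
    then show ?thesis using dz resolvent_inf[of A z] resolvent_inf[of B z] by simp
  next
    case False
    have "resolvent_norm A z = ereal (spec_norm (poly_mat [:(z - trace A) / det (mat z - A), 1 / det (mat z - A):] A))"
      using resolvent_fin[OF False] res_poly[OF False] by simp
    also have "\<dots> = ereal (spec_norm (poly_mat [:(z - trace B) / det (mat z - B), 1 / det (mat z - B):] B))"
      using h td dz by simp
    also have "\<dots> = resolvent_norm B z"
      using resolvent_fin[of z B] res_poly[of z B] False dz by simp
    finally show ?thesis .
  qed
qed

lemma P1_P4:
  fixes A B :: "complex^2^2"
  assumes h: "\<And>z. resolvent_norm A z = resolvent_norm B z"
  shows "unitarily_similar A B"
proof -
  have "det (mat z - A) = 0 \<longleftrightarrow> det (mat z - B) = 0" for z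
    using h[of z] resolvent_inf[of A z] resolvent_inf[of B z] by simp
  then have td: "trace A = trace B \<and> det A = det B" by (rule roots_eq)
  then have dz: "det (mat z - A) = det (mat z - B)" for z unfolding detz by simp
  obtain z0 where z0: "det (mat z0 - A) \<noteq> 0" using nonroot by blast
  define MA where "MA = mat z0 - A"
  define MB where "MB = mat z0 - B"
  have dA: "det MA \<noteq> 0" unfolding MA_def using z0 .
  have dB: "det MB = det MA" unfolding MA_def MB_def using dz by simp
  have dB0: "det MB \<noteq> 0" using dA dB by simp
  have sn: "spec_norm (matrix_inv MA) = spec_norm (matrix_inv MB)"
    using h[of z0] resolvent_fin[OF z0] resolvent_fin[of z0 B] z0 dz unfolding MA_def MB_def by simp
  have fpos: "0 < frob2 MA" using F_ge[of MA] dA unfolding dd_def by (smt (verit) zero_less_norm_iff)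
  have "0 < frob2 (matrix_inv MA)" unfolding frob_inv[OF dA] using fpos dA by simp
  then have "matrix_inv MA \<noteq> 0" by (metis frob_zero less_irrefl)
  then have "spec_norm (matrix_inv MA) \<noteq> 0" using spec_norm_zero by blast
  moreover have "spec_norm (matrix_inv MA) \<ge> 0" unfolding spec_norm_formula using r1_nonneg by simp
  ultimately have spos: "0 < spec_norm (matrix_inv MA)" by simp
  have "frob2 (matrix_inv MA) = frob2 (matrix_inv MB)"
    using frob_from_norm[OF spos] frob_from_norm[of "matrix_inv MB"] spos sn
      frob_inv(2)[OF dA] frob_inv(2)[OF dB0] dB by simp
  then have "frob2 MA = frob2 MB" unfolding frob_inv[OF dA] frob_inv[OF dB0] dB using dA by simp
  then have "frob2 A = frob2 B" using frob_shift[of A B z0] td unfolding MA_def MB_def by simp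
  then show ?thesis using key_us td by blast
qed

lemma P3_P4:
  fixes A B :: "complex^2^2"
  assumes h: "\<And>z k. k \<in> {1, 2} \<Longrightarrow> sing_val (mat z - A) k = sing_val (mat z - B) k"
  shows "unitarily_similar A B"
proof -
  have r: "r1 (mat z - A) = r1 (mat z - B) \<and> r2 (mat z - A) = r2 (mat z - B)" for z
  proof -
    have "sing_val (mat z - A) 1 = sing_val (mat z - B) 1" "sing_val (mat z - A) 2 = sing_val (mat z - B) 2"
      using h by simp_all
    then have "sqrt (r1 (mat z - A)) = sqrt (r1 (mat z - B))" "sqrt (r2 (mat z - A)) = sqrt (r2 (mat z - B))"
      unfolding sing_vals by simp_all
    then show ?thesis by simp
  qed
  have "det (mat z - A) = 0 \<longleftrightarrow> det (mat z - B) = 0" for z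
    using r[of z] r2_zero[of "mat z - A"] r2_zero[of "mat z - B"] by simp
  then have td: "trace A = trace B \<and> det A = det B" by (rule roots_eq)
  have "frob2 (mat 0 - A) = frob2 (mat 0 - B)"
    using r[of 0] r_props(4)[of "mat 0 - A"] r_props(4)[of "mat 0 - B"] by simp
  then have "frob2 A = frob2 B" using frob_shift[of A B 0] td by simp
  then show ?thesis using key_us td by blast
qed

theorem theorem2:
  fixes A B :: "complex^2^2"
  shows "((\<forall>z. resolvent_norm A z = resolvent_norm B z) \<longleftrightarrow>
          (\<forall>p. spec_norm (poly_mat p A) = spec_norm (poly_mat p B))) \<and>
         ((\<forall>p. spec_norm (poly_mat p A) = spec_norm (poly_mat p B)) \<longleftrightarrow>
          (\<forall>z. \<forall>k\<in>{1, 2}. sing_val (mat z - A) k = sing_val (mat z - B) k)) \<and>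
         ((\<forall>z. \<forall>k\<in>{1, 2}. sing_val (mat z - A) k = sing_val (mat z - B) k) \<longleftrightarrow>
          unitarily_similar A B)"
proof -
  have 14: "(\<forall>z. resolvent_norm A z = resolvent_norm B z) \<Longrightarrow> unitarily_similar A B"
    using P1_P4 by blast
  have 42: "unitarily_similar A B \<Longrightarrow> (\<forall>p. spec_norm (poly_mat p A) = spec_norm (poly_mat p B))"
    using P4_P2 by blast
  have 21: "(\<forall>p. spec_norm (poly_mat p A) = spec_norm (poly_mat p B)) \<Longrightarrow> (\<forall>z. resolvent_norm A z = resolvent_norm B z)"
    using P2_P1 by blast
  have 43: "unitarily_similar A B \<Longrightarrow> (\<forall>z. \<forall>k\<in>{1, 2}. sing_val (mat z - A) k = sing_val (mat z - B) k)"
    using P4_P3 by blast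
  have 34: "(\<forall>z. \<forall>k\<in>{1, 2}. sing_val (mat z - A) k = sing_val (mat z - B) k) \<Longrightarrow> unitarily_similar A B"
    using P3_P4 by blast
  show ?thesis using 14 42 21 43 34 by blast
qed


end
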